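(* Let $n$ be odd and squarefree, with every prime divisor of $n$ at least $7$ and $\Omega(n)\geq 2$, and let $A=S(n)$. Let $S=(x_1,\ldots,x_k)$ be a sequence in $\mathbb{Z}_n$ of length $k=\Omega(n)$. (1) Suppose $S$ is equivalent with respect to $A$ to a sequence $(y_1,\ldots,y_k)$ for which there is a prime divisor $p$ of $n$ such that $y_1$ is the only term not divisible by $p$, and suppose that, with $n'=n/p$, $T=(y_2,\ldots,y_k)$ and $T'$ the image of $T$ under the natural map $\mathbb{Z}_n\to\mathbb{Z}_{n'}$, the sequence $T'$ is a $U(n')$-extremal sequence for the Davenport constant. Then $S$ is an $A$-extremal sequence for the Davenport constant. (2) If $\Omega(n)=2$ and $S$ is equivalent with respect to $A$ to a sequence $(y_1,y_2)$ with $y_1\in S(n)$ and $-y_2\in U(n)\setminus S(n)$, then $S$ is an $A$-extremal sequence for the Davenport constant.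
   Context: $\mathbb{Z}_m$ is the integers mod $m$, $U(m)$ its unit group. For nonempty $A\subseteq\mathbb{Z}_m\setminus\{0\}$, a sequence $(x_1,\ldots,x_k)$ in $\mathbb{Z}_m$ is an $A$-weighted zero-sum sequence if $\sum a_ix_i=0$ for some $a_i\in A$; $D_A(m)$ is the least $k$ such that every length-$k$ sequence in $\mathbb{Z}_m$ has a nonempty $A$-weighted zero-sum subsequence. An $A$-extremal sequence for the Davenport constant is a sequence in $\mathbb{Z}_m$ of length $D_A(m)-1$ having no $A$-weighted zero-sum subsequence. When $A$ is a multiplicative group, $(x_1,\ldots,x_k)$ and $(y_1,\ldots,y_k)$ are equivalent with respect to $A$ if there exist $a_i\in A$, a unit $c$ and a permutation $\sigma$ with $y_{\sigma(i)}=c\,a_ix_i$ for all $i$. $\Omega(n)$ is the number of prime factors of $n$ with multiplicity. For odd $n=\prod p_i^{r_i}$ and $a\in U(n)$, $\left(\frac{a}{n}\right)=\prod\left(\frac{a}{p_i}\right)^{r_i}$ (Legendre symbols of images mod $p_i$), and $S(n)$ is the kernel of $a\mapsto\left(\frac{a}{n}\right)$ on $U(n)$. *)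

theory Defs
  imports "HOL-Number_Theory.Number_Theory" "HOL-Combinatorics.Permutations" "HOL-Computational_Algebra.Squarefree"
begin

text \<open>Z_m is represented by the integers in {0..<m}; a sequence in Z_m is an int list
  with all entries in this set.\<close>

definition Zmod :: "nat \<Rightarrow> int set" where
  "Zmod m = {0..<int m}"

definition Umod :: "nat \<Rightarrow> int set" where
  "Umod m = {a \<in> Zmod m. coprime a (int m)}"

definition Omega :: "nat \<Rightarrow> nat" where
  "Omega n = size (prime_factorization n)"

definition jacobi_sym :: "nat \<Rightarrow> int \<Rightarrow> int" where
  "jacobi_sym n a = (\<Prod>p\<in>prime_factors n. Legendre a (int p) ^ multiplicity p n)"

definition Sgrp :: "nat \<Rightarrow> int set" where
  "Sgrp n = {a \<in> Umod n. jacobi_sym n a = 1}"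

definition has_wzs :: "nat \<Rightarrow> int set \<Rightarrow> int list \<Rightarrow> bool" where
  "has_wzs m A xs \<longleftrightarrow>
     (\<exists>I a. I \<subseteq> {..<length xs} \<and> I \<noteq> {} \<and> (\<forall>i\<in>I. a i \<in> A) \<and>
        [(\<Sum>i\<in>I. a i * xs ! i) = 0] (mod int m))"

definition davenport :: "nat \<Rightarrow> int set \<Rightarrow> nat" where
  "davenport m A = (LEAST k. \<forall>xs. length xs = k \<and> set xs \<subseteq> Zmod m \<longrightarrow> has_wzs m A xs)"

definition extremal :: "nat \<Rightarrow> int set \<Rightarrow> int list \<Rightarrow> bool" where
  "extremal m A xs \<longleftrightarrow> set xs \<subseteq> Zmod m \<and> length xs = davenport m A - 1 \<and> \<not> has_wzs m A xs"

definition equiv_seq :: "nat \<Rightarrow> int set \<Rightarrow> int list \<Rightarrow> int list \<Rightarrow> bool" where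
  "equiv_seq m A xs ys \<longleftrightarrow> length xs = length ys \<and>
     (\<exists>a c \<sigma>. \<sigma> permutes {..<length xs} \<and> (\<forall>i<length xs. a i \<in> A) \<and> c \<in> Umod m \<and>
        (\<forall>i<length xs. [ys ! (\<sigma> i) = c * a i * xs ! i] (mod int m)))"

end

theory Submission
  imports Defs
begin


lemma QR_cong: "[a = b] (mod p) \<Longrightarrow> QuadRes p a \<Longrightarrow> QuadRes p b"
  unfolding QuadRes_def using cong_trans by blast

lemma Leg_cong: "[a = b] (mod p) \<Longrightarrow> Legendre a p = Legendre b p"
proof -
  assume h: "[a = b] (mod p)"
  then have h': "[b = a] (mod p)" by (rule cong_sym)
  have "QuadRes p a = QuadRes p b" using QR_cong h h' by blast
  moreover have "[a = 0] (mod p) = [b = 0] (mod p)" using h h' cong_trans by blast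
  ultimately show ?thesis unfolding Legendre_def by simp
qed

lemma Leg_vals: "Legendre a p = 0 \<or> Legendre a p = 1 \<or> Legendre a p = -1"
  unfolding Legendre_def by auto

lemma Leg_0_iff: "Legendre a p = 0 \<longleftrightarrow> p dvd a"
  unfolding Legendre_def by (auto simp: cong_0_iff)

lemma Leg_mult:
  fixes p :: nat
  assumes "prime p" "2 < p"
  shows "Legendre (a*b) (int p) = Legendre a (int p) * Legendre b (int p)"
proof -
  let ?h = "(p - 1) div 2"
  have h1: "[Legendre (a*b) p = (a*b) ^ ?h] (mod p)"
    by (rule euler_criterion[OF assms])
  have "[Legendre a p = a ^ ?h] (mod p)" "[Legendre b p = b ^ ?h] (mod p)"
    by (rule euler_criterion[OF assms])+
  then have h2: "[Legendre a p * Legendre b p = a ^ ?h * b ^ ?h] (mod p)"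
    by (rule cong_mult)
  have "[Legendre (a*b) p = Legendre a p * Legendre b p] (mod p)"
    using h1 h2 unfolding power_mult_distrib using cong_sym cong_trans by blast
  then have d: "int p dvd Legendre (a*b) p - Legendre a p * Legendre b p"
    by (simp add: cong_iff_dvd_diff)
  have "\<bar>Legendre (a*b) p - Legendre a p * Legendre b p\<bar> \<le> 2"
    using Leg_vals[of "a*b" p] Leg_vals[of a p] Leg_vals[of b p] by auto
  then show ?thesis using d dvd_imp_le_int[of "Legendre (a*b) p - Legendre a p * Legendre b p" "int p"] assms
    by fastforce
qed

lemma Leg_sq:
  fixes p :: nat
  assumes "prime p" "\<not> int p dvd a"
  shows "Legendre (a*a) p = 1"
proof -
  have pi: "prime (int p)" using assms by simp
  have "\<not> int p dvd a*a" using assms prime_dvd_mult_iff[OF pi] by blast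
  moreover have "QuadRes p (a*a)" unfolding QuadRes_def
    by (rule exI[of _ a]) (simp add: power2_eq_square)
  ultimately show ?thesis unfolding Legendre_def by (simp add: cong_0_iff)
qed

lemma Leg_1:
  fixes p :: nat
  assumes "prime p"
  shows "Legendre 1 p = 1"
  using Leg_sq[of p 1] assms prime_gt_1_nat by fastforce

lemma nonres_exists:
  fixes p :: nat
  assumes "prime p" "2 < p"
  shows "\<exists>g. Legendre g p = -1"
proof -
  obtain g where g: "residue_primroot p g" using prime_primitive_root_exists[of p] assms(1) prime_gt_1_nat by blast
  have ordg: "ord p g = p - 1" and cop: "coprime p g"
    using g assms by (auto simp: residue_primroot_def totient_prime)
  show ?thesis
  proof (rule ccontr)
    assume "\<not> ?thesis"
    then have "Legendre (int g) p \<noteq> -1" by blast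
    moreover have "Legendre (int g) p \<noteq> 0"
    proof
      assume "Legendre (int g) p = 0"
      then have "int p dvd int g" using Leg_0_iff by blast
      then have "p dvd g" by simp
      then have "is_unit p" using cop coprime_absorb_left[of p g] by blast
      then show False using assms(1) by simp
    qed
    ultimately have L1: "Legendre (int g) p = 1" using Leg_vals by blast
    let ?h = "(p - 1) div 2"
    have "[Legendre (int g) p = (int g) ^ ?h] (mod p)"
      by (rule euler_criterion[OF assms])
    then have "[int (g ^ ?h) = int 1] (mod int p)" using L1 by (simp add: cong_sym)
    then have "[g ^ ?h = 1] (mod p)" using cong_int_iff by blast
    then have "ord p g dvd ?h" using ord_divides by blast
    then have "p - 1 dvd ?h" using ordg by simp
    moreover have "0 < ?h" "?h < p - 1" using assms by auto
    ultimately have "p - 1 \<le> ?h" using dvd_imp_le by blast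
    then show False using \<open>?h < p - 1\<close> by linarith
  qed
qed

lemma inv_exists:
  fixes p :: nat
  assumes "prime p" "\<not> int p dvd a"
  shows "\<exists>b. [a*b = 1] (mod int p)"
proof -
  have pi: "prime (int p)" using assms by simp
  have "coprime a (int p)" using prime_imp_coprime[OF pi] assms(2) coprime_commute by blast
  then show ?thesis using cong_solve_coprime_int by blast
qed




lemma Leg_unit:
  "\<not> int p dvd a \<Longrightarrow> Legendre a p = 1 \<or> Legendre a p = -1"
  using Leg_vals Leg_0_iff by metis

lemma small_ndvd:
  fixes p :: nat
  assumes "prime p" "p \<ge> 7" "0 < k" "k < 7"
  shows "\<not> int p dvd k" "\<not> int p dvd -k"
  using assms zdvd_imp_le[of "int p" k] by auto

lemma P11:
  fixes p :: nat
  assumes "prime p" "p \<ge> 7"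
  shows "\<exists>x y. Legendre x p = 1 \<and> Legendre y p = 1 \<and> [x + y = 1] (mod int p)"
proof -
  have n5: "\<not> int p dvd 5" using small_ndvd[OF assms, of 5] by simp
  obtain b where b: "[5*b = 1] (mod int p)" using inv_exists[OF assms(1) n5] by blast
  have pi: "prime (int p)" using assms by simp
  have nb: "\<not> int p dvd b"
  proof
    assume "int p dvd b"
    then have "[5*b = 0] (mod int p)" by (simp add: cong_0_iff)
    then have "[1 = 0] (mod int p)" using b cong_sym cong_trans by blast
    then show False using assms by (simp add: cong_0_iff)
  qed
  have n4: "\<not> int p dvd 4*b" "\<not> int p dvd 3*b"
    using prime_dvd_mult_iff[OF pi] nb small_ndvd[OF assms, of 4] small_ndvd[OF assms, of 3] by auto
  have "Legendre ((4*b)*(4*b)) p = 1" "Legendre ((3*b)*(3*b)) p = 1"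
    by (rule Leg_sq[OF assms(1) n4(1)], rule Leg_sq[OF assms(1) n4(2)])
  moreover have "[(4*b)*(4*b) + (3*b)*(3*b) = 1] (mod int p)"
  proof -
    have "(4*b)*(4*b) + (3*b)*(3*b) = (5*b)*(5*b)" by (simp add: algebra_simps)
    moreover have "[(5*b)*(5*b) = 1*1] (mod int p)" using b cong_mult by blast
    ultimately show ?thesis by simp
  qed
  ultimately show ?thesis by blast
qed

lemma Leg_m:
  fixes p :: nat
  assumes "prime p" "2 < p"
  shows "Legendre (-a) p = Legendre (-1) p * Legendre a p"
  using Leg_mult[OF assms, of "-1" a] by simp

lemma P1m:
  fixes p :: nat
  assumes "prime p" "p \<ge> 7"
  shows "\<exists>x y. Legendre x p = 1 \<and> Legendre y p = -1 \<and> [x + y = 1] (mod int p)"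
proof (rule ccontr)
  assume "\<not> ?thesis"
  then have H: "\<And>x. Legendre x p = 1 \<Longrightarrow> Legendre (1 - x) p \<noteq> -1" by force
  have p2: "2 < p" using assms by simp
  note LM = Leg_mult[OF assms(1) p2]
  have pi: "prime (int p)" using assms by simp
  have sq: "Legendre (k*k) p = 1" if "0 < k" "k < 7" for k
    using Leg_sq[OF assms(1)] small_ndvd[OF assms that] by blast
  have a3: "Legendre (-3) p = 1"
    using H[OF sq[of 2]] Leg_unit[OF small_ndvd(2)[OF assms, of 3]] by simp
  have a8: "Legendre (-8) p = 1"
  proof -
    have "\<not> int p dvd -8" using small_ndvd(2)[OF assms, of 2] prime_dvd_power_iff[OF pi, of 3 "-2"]
      by simp
    then show ?thesis using H[OF sq[of 3]] Leg_unit by fastforce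
  qed
  have a24: "Legendre (-24) p = 1"
  proof -
    have "\<not> int p dvd -24" using small_ndvd(2)[OF assms, of 2] small_ndvd(1)[OF assms, of 3]
        prime_dvd_mult_iff[OF pi, of "-8" 3] prime_dvd_power_iff[OF pi, of 3 "-2"]
      by simp
    then show ?thesis using H[OF sq[of 5]] Leg_unit by fastforce
  qed
  have m2: "Legendre (-2) p = 1" using a8 LM[of "-2" "2*2"] sq[of 2] by simp
  have m6: "Legendre (-6) p = 1" using a24 LM[of "-6" "2*2"] sq[of 2] by simp
  have l3: "Legendre 3 p = 1" using m6 m2 LM[of "-2" 3] by simp
  have m1: "Legendre (-1) p = 1" using a3 l3 LM[of "-1" 3] by simp
  have step: "Legendre (z - 1) p \<noteq> -1" if "Legendre z p \<noteq> -1" for z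
  proof -
    have "Legendre z p = 0 \<or> Legendre z p = 1" using that Leg_vals by blast
    then show ?thesis
    proof
      assume "Legendre z p = 0"
      then have "[z = 0] (mod int p)" using Leg_0_iff cong_0_iff by blast
      then have "[z - 1 = 0 - 1] (mod int p)" using cong_diff[of z 0 "int p" 1 1] by simp
      then have "Legendre (z - 1) p = Legendre (-1) p" using Leg_cong by force
      then show ?thesis using m1 by simp
    next
      assume "Legendre z p = 1"
      then have "Legendre (1 - z) p \<noteq> -1" by (rule H)
      moreover have "Legendre (z - 1) p = Legendre (-1) p * Legendre (1 - z) p"
        using LM[of "-1" "1 - z"] by simp
      ultimately show ?thesis using m1 by simp
    qed
  qed
  have all: "Legendre (- int m) p \<noteq> -1" for m :: nat
  proof (induction m)
    case 0
    then show ?case by (simp add: Legendre_def)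
  next
    case (Suc m)
    have "- int (Suc m) = - int m - 1" by simp
    then show ?case using step[of "- int m"] Suc by metis
  qed
  obtain g where g: "Legendre g p = -1" using nonres_exists[OF assms(1) p2] by blast
  let ?m = "nat ((- g) mod int p)"
  have "[- int ?m = g] (mod int p)"
  proof -
    have "int ?m = (- g) mod int p" using assms by simp
    then have "[int ?m = - g] (mod int p)" by (simp add: cong_def)
    then have "[- int ?m = - (- g)] (mod int p)" by (rule cong_uminus)
    then show ?thesis by simp
  qed
  then have "Legendre (- int ?m) p = -1" using Leg_cong g by metis
  then show False using all by blast
qed

lemma Pm1:
  fixes p :: nat
  assumes "prime p" "p \<ge> 7"
  shows "\<exists>x y. Legendre x p = -1 \<and> Legendre y p = 1 \<and> [x + y = 1] (mod int p)"
proof -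
  obtain x y where "Legendre x p = 1" "Legendre y p = -1" "[x + y = 1] (mod int p)"
    using P1m[OF assms] by blast
  then have "Legendre y p = -1 \<and> Legendre x p = 1 \<and> [y + x = 1] (mod int p)"
    by (simp add: add.commute)
  then show ?thesis by blast
qed

lemma Pmm:
  fixes p :: nat
  assumes "prime p" "p \<ge> 7"
  shows "\<exists>x y. Legendre x p = -1 \<and> Legendre y p = -1 \<and> [x + y = 1] (mod int p)"
proof (rule ccontr)
  assume "\<not> ?thesis"
  then have H: "\<And>x. Legendre x p = -1 \<Longrightarrow> Legendre (1 - x) p \<noteq> -1" by force
  have p2: "2 < p" using assms by simp
  note LM = Leg_mult[OF assms(1) p2]
  have one: "Legendre 1 p = 1" by (rule Leg_1[OF assms(1)])
  have H2: "Legendre (1 - x) p = 1" if "Legendre x p = -1" for x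
  proof -
    have "\<not> int p dvd 1 - x"
    proof
      assume "int p dvd 1 - x"
      then have "[x = 1] (mod int p)" by (simp add: cong_iff_dvd_diff dvd_diff_commute)
      then have "Legendre x p = 1" using Leg_cong[of x 1 "int p"] one by simp
      then show False using that by simp
    qed
    then show ?thesis using H[OF that] Leg_unit by blast
  qed
  obtain g where g: "Legendre g p = -1" using nonres_exists[OF assms(1) p2] by blast
  have ng: "\<not> int p dvd g"
  proof
    assume "int p dvd g"
    then have "Legendre g p = 0" using Leg_0_iff by blast
    then show False using g by simp
  qed
  obtain b where b: "[g*b = 1] (mod int p)" using inv_exists[OF assms(1) ng] by blast
  have "Legendre (g*b) p = 1" using Leg_cong[OF b] one by (rule trans)
  then have lb: "Legendre b p = -1" using LM[of g b] g by simp
  have "Legendre (g * (1 - b)) p = -1" using LM[of g "1-b"] H2[OF lb] g by simp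
  moreover have "[g * (1 - b) = g - 1] (mod int p)"
  proof -
    have "g * (1 - b) = g - g*b" by (simp add: algebra_simps)
    moreover have "[g - g*b = g - 1] (mod int p)" by (rule cong_diff[OF cong_refl b])
    ultimately show ?thesis by simp
  qed
  ultimately have lg1: "Legendre (g - 1) p = -1" using Leg_cong[of "g * (1 - b)" "g - 1" "int p"] by simp
  have "Legendre (g - 1) p = Legendre (-1) p * Legendre (1 - g) p"
    using LM[of "-1" "1 - g"] by simp
  then have m1: "Legendre (-1) p = -1" using lg1 H2[OF g] by simp
  have step: "Legendre (z - 1) p = -1" if "Legendre z p = -1" for z
    using LM[of "-1" "1 - z"] H2[OF that] m1 by simp
  have all: "Legendre (g - int m) p = -1" for m :: nat
  proof (induction m)
    case 0
    then show ?case using g by simp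
  next
    case (Suc m)
    have e: "g - int (Suc m) = (g - int m) - 1" by simp
    show ?case unfolding e by (rule step[OF Suc])
  qed
  let ?m = "nat (g mod int p)"
  have "[g - int ?m = 0] (mod int p)"
  proof -
    have "int ?m = g mod int p" using assms by simp
    then have "g - int ?m = int p * (g div int p)" using minus_mod_eq_mult_div[of g "int p"] by simp
    then show ?thesis unfolding cong_0_iff by simp
  qed
  then have "Legendre (g - int ?m) p = 0" using Leg_0_iff cong_0_iff by blast
  then show False using all[of ?m] by simp
qed




lemma P_all:
  fixes p :: nat
  assumes "prime p" "p \<ge> 7" "e1 \<in> {1,-1}" "e2 \<in> {1,-1}"
  shows "\<exists>x y. Legendre x p = e1 \<and> Legendre y p = e2 \<and> [x + y = 1] (mod int p)"
  using assms(3,4) P11[OF assms(1,2)] P1m[OF assms(1,2)] Pm1[OF assms(1,2)] Pmm[OF assms(1,2)]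
  by (elim insertE) auto

lemma Leg_sign_sq: "e \<in> {1,-1} \<Longrightarrow> e * e = (1::int)"
  by auto

lemma Leg_unit': "\<not> int p dvd a \<Longrightarrow> Legendre a p \<in> {1,-1}"
  using Leg_unit by blast

lemma sign_exists:
  fixes p :: nat
  assumes "prime p" "2 < p" "e \<in> {1,-1}"
  shows "\<exists>c. Legendre c p = e"
  using assms(3) Leg_1[OF assms(1)] nonres_exists[OF assms(1,2)] by auto

lemma Rep:
  fixes p :: nat
  assumes "prime p" "p \<ge> 7" "e1 \<in> {1,-1}" "e2 \<in> {1,-1}" "\<not> int p dvd t"
  shows "\<exists>x y. Legendre x p = e1 \<and> Legendre y p = e2 \<and> [x + y = t] (mod int p)"
proof -
  have p2: "2 < p" using assms by simp
  note LM = Leg_mult[OF assms(1) p2]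
  define l where "l = Legendre t p"
  have l: "l \<in> {1,-1}" unfolding l_def using Leg_unit' assms(5) by blast
  have "e1 * l \<in> {1,-1}" "e2 * l \<in> {1,-1}" using assms(3,4) l by auto
  then obtain x0 y0 where xy: "Legendre x0 p = e1 * l" "Legendre y0 p = e2 * l" "[x0 + y0 = 1] (mod int p)"
    using P_all[OF assms(1,2)] by blast
  have "Legendre (x0 * t) p = e1" using LM[of x0 t] xy(1) l unfolding l_def[symmetric] by auto
  moreover have "Legendre (y0 * t) p = e2" using LM[of y0 t] xy(2) l unfolding l_def[symmetric] by auto
  moreover have "[x0 * t + y0 * t = t] (mod int p)"
  proof -
    have "[(x0 + y0) * t = 1 * t] (mod int p)" using xy(3) cong_scalar_right by blast
    then show ?thesis by (simp add: algebra_simps)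
  qed
  ultimately show ?thesis by blast
qed

lemma inv_leg:
  fixes p :: nat
  assumes "prime p" "2 < p" "[u * u' = 1] (mod int p)"
  shows "Legendre u' p = Legendre u p" "\<not> int p dvd u" "\<not> int p dvd u'"
proof -
  note LM = Leg_mult[OF assms(1,2)]
  have "Legendre (u * u') p = 1" using Leg_cong[OF assms(3)] Leg_1[OF assms(1)] by (rule trans)
  then have e: "Legendre u p * Legendre u' p = 1" using LM[of u u'] by simp
  then show "Legendre u' p = Legendre u p" using Leg_vals[of u p] Leg_vals[of u' p] by auto
  show "\<not> int p dvd u"
  proof
    assume "int p dvd u" then have "Legendre u p = 0" using Leg_0_iff by blast
    then show False using e by simp
  qed
  show "\<not> int p dvd u'"
  proof
    assume "int p dvd u'" then have "Legendre u' p = 0" using Leg_0_iff by blast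
    then show False using e by simp
  qed
qed

lemma N2:
  fixes p :: nat
  assumes "prime p" "p \<ge> 7" "e1 \<in> {1,-1}" "e2 \<in> {1,-1}" "e3 \<in> {1,-1}"
    and "\<not> int p dvd u" "\<not> int p dvd v" "\<not> int p dvd w"
  shows "\<exists>a b c. Legendre a p = e1 \<and> Legendre b p = e2 \<and> Legendre c p = e3 \<and>
            [a*u + b*v + c*w = 0] (mod int p)"
proof -
  have p2: "2 < p" using assms by simp
  note LM = Leg_mult[OF assms(1) p2]
  have pi: "prime (int p)" using assms by simp
  obtain c where c: "Legendre c p = e3" using sign_exists[OF assms(1) p2 assms(5)] by blast
  have nc: "\<not> int p dvd c"
  proof
    assume "int p dvd c" then have "Legendre c p = 0" using Leg_0_iff by blast
    then show False using c assms(5) by simp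
  qed
  have nt: "\<not> int p dvd -(c*w)" using nc assms(8) prime_dvd_mult_iff[OF pi] by simp
  have lu: "Legendre u p \<in> {1,-1}" "Legendre v p \<in> {1,-1}" using Leg_unit' assms(6,7) by blast+
  have "e1 * Legendre u p \<in> {1,-1}" "e2 * Legendre v p \<in> {1,-1}" using assms(3,4) lu by auto
  then obtain x y where xy: "Legendre x p = e1 * Legendre u p" "Legendre y p = e2 * Legendre v p"
     "[x + y = -(c*w)] (mod int p)"
    using Rep[OF assms(1,2) _ _ nt] by blast
  obtain u' where u': "[u * u' = 1] (mod int p)" using inv_exists[OF assms(1,6)] by blast
  obtain v' where v': "[v * v' = 1] (mod int p)" using inv_exists[OF assms(1,7)] by blast
  have "Legendre (x*u') p = e1" using LM[of x u'] xy(1) inv_leg[OF assms(1) p2 u'] lu(1) by auto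
  moreover have "Legendre (y*v') p = e2" using LM[of y v'] xy(2) inv_leg[OF assms(1) p2 v'] lu(2) by auto
  moreover have "[(x*u')*u + (y*v')*v + c*w = 0] (mod int p)"
  proof -
    have "[x*(u*u') + y*(v*v') + c*w = x*1 + y*1 + c*w] (mod int p)"
      using u' v' by (intro cong_add cong_mult cong_refl) auto
    moreover have "[x*1 + y*1 + c*w = -(c*w) + c*w] (mod int p)"
      using cong_add[OF xy(3) cong_refl[of "c*w"]] by simp
    ultimately have "[x*(u*u') + y*(v*v') + c*w = 0] (mod int p)" using cong_trans by fastforce
    then show ?thesis by (simp add: algebra_simps)
  qed
  ultimately show ?thesis using c by blast
qed




lemma sf_mult1:
  assumes "squarefree (n::nat)" "p \<in> prime_factors n"
  shows "multiplicity p n = 1"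
proof -
  have "n \<noteq> 0" using assms(1) by (cases "n = 0") auto
  then show ?thesis using squarefree_factorial_semiring'[of n] assms by blast
qed

lemma sf_nz: "squarefree (n::nat) \<Longrightarrow> n \<noteq> 0"
  by (cases "n = 0") auto

lemma sf_prod:
  assumes "squarefree (n::nat)"
  shows "(\<Prod>p\<in>prime_factors n. p) = n"
proof -
  have "(\<Prod>p\<in>prime_factors n. p ^ multiplicity p n) = n"
    using prod_prime_factors[of n] sf_nz[OF assms] by simp
  moreover have "(\<Prod>p\<in>prime_factors n. p ^ multiplicity p n) = (\<Prod>p\<in>prime_factors n. p)"
    by (rule prod.cong) (auto simp: sf_mult1[OF assms])
  ultimately show ?thesis by simp
qed

lemma sf_Omega:
  assumes "squarefree (n::nat)"
  shows "Omega n = card (prime_factors n)"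
proof -
  have "prime_factorization n = mset_set (prime_factors n)"
  proof (rule multiset_eqI)
    fix p
    show "count (prime_factorization n) p = count (mset_set (prime_factors n)) p"
    proof (cases "p \<in> prime_factors n")
      case True
      then have "prime p" by auto
      then show ?thesis using True sf_mult1[OF assms True] count_prime_factorization_prime[of p n]
        by simp
    next
      case False
      then show ?thesis by (simp add: not_in_iff)
    qed
  qed
  then have "size (prime_factorization n) = size (mset_set (prime_factors n))" by (rule arg_cong)
  also have "\<dots> = card (prime_factors n)" by (rule size_mset_set)
  finally show ?thesis unfolding Omega_def .
qed

lemma jacobi_sf:
  assumes "squarefree (n::nat)"
  shows "jacobi_sym n a = (\<Prod>p\<in>prime_factors n. Legendre a (int p))"
  unfolding jacobi_sym_def by (rule prod.cong) (auto simp: sf_mult1[OF assms])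

lemma jacobi_cong:
  assumes "squarefree (n::nat)" "[a = b] (mod int n)"
  shows "jacobi_sym n a = jacobi_sym n b"
  unfolding jacobi_sf[OF assms(1)]
proof (rule prod.cong)
  fix p assume "p \<in> prime_factors n"
  then have "int p dvd int n" by auto
  then have "[a = b] (mod int p)" using cong_dvd_modulus assms(2) by blast
  then show "Legendre a (int p) = Legendre b (int p)" by (rule Leg_cong)
qed simp

lemma jacobi_mult:
  assumes "squarefree (n::nat)" "\<forall>p\<in>prime_factors n. p \<ge> 7"
  shows "jacobi_sym n (a*b) = jacobi_sym n a * jacobi_sym n b"
  unfolding jacobi_sf[OF assms(1)] prod.distrib[symmetric]
proof (rule prod.cong)
  fix p assume p: "p \<in> prime_factors n"
  then have "prime p" "2 < p" using assms(2) by auto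
  then show "Legendre (a*b) (int p) = Legendre a (int p) * Legendre b (int p)" by (rule Leg_mult)
qed simp

lemma coprime_ndvd:
  assumes "coprime a (int n)" "p \<in> prime_factors n"
  shows "\<not> int p dvd a"
proof
  assume "int p dvd a"
  moreover have "int p dvd int n" using assms(2) by auto
  ultimately have "is_unit (int p)" using assms(1) coprime_common_divisor by blast
  moreover have "prime (int p)" using assms(2) by auto
  ultimately show False using not_prime_unit by blast
qed

lemma prod_pm1:
  assumes "finite A" "\<forall>x\<in>A. f x \<in> {1,-1::int}"
  shows "prod f A \<in> {1,-1}"
  using assms by (induction A rule: finite_induct) auto

lemma jacobi_unit:
  assumes "squarefree (n::nat)" "coprime a (int n)"
  shows "jacobi_sym n a \<in> {1,-1}"
  unfolding jacobi_sf[OF assms(1)]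
proof (rule prod_pm1)
  show "\<forall>x\<in>prime_factors n. Legendre a (int x) \<in> {1, - 1}"
    using Leg_unit' coprime_ndvd[OF assms(2)] by blast
qed simp

lemma all_primes_dvd:
  assumes "squarefree (n::nat)" "\<forall>p\<in>prime_factors n. int p dvd s"
  shows "int n dvd s"
proof -
  have key: "int (\<Prod>Q) dvd s" if "finite Q" "Q \<subseteq> prime_factors n" for Q
    using that
  proof (induction Q rule: finite_induct)
    case empty
    then show ?case by simp
  next
    case (insert q Q)
    have q: "q \<in> prime_factors n" using insert by auto
    have cop: "coprime (int q) (int (\<Prod>Q))"
    proof -
      have "coprime q (\<Prod>Q)"
      proof (rule prod_coprime_right)
        fix r assume "r \<in> Q"
        then have "r \<in> prime_factors n" "r \<noteq> q" using insert by auto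
        moreover have "prime q" "prime r" using q calculation(1) by auto
        ultimately show "coprime q r" using primes_coprime by blast
      qed
      then show ?thesis using coprime_int_iff[of q "\<Prod>Q"] by blast
    qed
    have "int q * int (\<Prod>Q) dvd s"
      using divides_mult[OF _ _ cop] insert assms(2) q by auto
    then show ?case using insert by simp
  qed
  have "int (\<Prod>(prime_factors n)) dvd s" by (rule key) auto
  then show ?thesis using sf_prod[OF assms(1)] by simp
qed




lemma coprime_from_primes:
  assumes "squarefree (n::nat)" "\<forall>p\<in>prime_factors n. \<not> int p dvd a"
  shows "coprime a (int n)"
proof -
  have "coprime a (\<Prod>p\<in>prime_factors n. int p)"
  proof (rule prod_coprime_right)
    fix p assume p: "p \<in> prime_factors n"
    then have "prime (int p)" by auto
    then show "coprime a (int p)" using prime_imp_coprime assms(2) p coprime_commute by blast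
  qed
  moreover have "int (\<Prod>p\<in>prime_factors n. p) = (\<Prod>p\<in>prime_factors n. int p)"
    by (rule of_nat_prod)
  ultimately show ?thesis unfolding sf_prod[OF assms(1)] by simp
qed

lemma glue:
  fixes n :: nat and xs :: "int list" and I :: "nat set" and w :: "nat \<Rightarrow> nat \<Rightarrow> int"
  assumes sf: "squarefree n"
    and I: "I \<subseteq> {..<length xs}" "I \<noteq> {}"
    and wl: "\<forall>i\<in>I. (\<Prod>p\<in>prime_factors n. Legendre (w i p) (int p)) = 1"
    and ws: "\<forall>p\<in>prime_factors n. [(\<Sum>i\<in>I. w i p * xs!i) = 0] (mod int p)"
  shows "has_wzs n (Sgrp n) xs"
proof -
  let ?P = "prime_factors n"
  have n0: "n > 0" using sf_nz[OF sf] by simp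
  have cop: "\<forall>p\<in>?P. \<forall>q\<in>?P. p \<noteq> q \<longrightarrow> coprime ((\<lambda>p. p) p) ((\<lambda>p. p) q)"
    by (auto intro: primes_coprime)
  have "\<forall>i. \<exists>x. \<forall>p\<in>?P. [x = nat (w i p mod int p)] (mod (\<lambda>p. p) p)"
  proof
    fix i
    show "\<exists>x. \<forall>p\<in>?P. [x = nat (w i p mod int p)] (mod (\<lambda>p. p) p)"
      by (rule chinese_remainder_nat[OF _ cop]) simp
  qed
  then have "\<exists>A. \<forall>i. \<forall>p\<in>?P. [A i = nat (w i p mod int p)] (mod (\<lambda>p. p) p)"
    by (rule choice)
  then obtain A where A: "\<forall>i. \<forall>p\<in>?P. [A i = nat (w i p mod int p)] (mod p)"
    by auto
  define a where "a i = int (A i) mod int n" for i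
  have acong: "[a i = w i p] (mod int p)" if p: "p \<in> ?P" for i p
  proof -
    have "prime p" using p by auto
    then have p0: "p > 0" by (rule prime_gt_0_nat)
    have "[int (A i) = int (nat (w i p mod int p))] (mod int p)"
      using A p cong_int_iff by blast
    moreover have "int (nat (w i p mod int p)) = w i p mod int p" using p0 by simp
    ultimately have "[int (A i) = w i p mod int p] (mod int p)" by simp
    then have c1: "[int (A i) = w i p] (mod int p)" by (simp add: cong_def)
    have "[a i = int (A i)] (mod int n)" unfolding a_def by (simp add: cong_def)
    moreover have "int p dvd int n" using p by auto
    ultimately have "[a i = int (A i)] (mod int p)" using cong_dvd_modulus by blast
    then show ?thesis using c1 cong_trans by blast
  qed
  have aS: "a i \<in> Sgrp n" if i: "i \<in> I" for i
  proof -
    have "\<forall>p\<in>?P. \<not> int p dvd a i"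
    proof
      fix p assume p: "p \<in> ?P"
      have "Legendre (a i) (int p) = Legendre (w i p) (int p)" using Leg_cong acong[OF p] by blast
      moreover have "Legendre (w i p) (int p) \<noteq> 0"
      proof
        assume z: "Legendre (w i p) (int p) = 0"
        have "(\<Prod>p\<in>?P. Legendre (w i p) (int p)) = 0"
          by (rule prod_zero) (use p z in auto)
        then show False using wl i by simp
      qed
      ultimately show "\<not> int p dvd a i"
      proof -
        assume h: "Legendre (a i) (int p) = Legendre (w i p) (int p)" "Legendre (w i p) (int p) \<noteq> 0"
        show "\<not> int p dvd a i"
        proof
          assume "int p dvd a i"
          then have "Legendre (a i) (int p) = 0" using Leg_0_iff by blast
          then show False using h by simp
        qed
      qed
    qed
    then have c: "coprime (a i) (int n)" by (rule coprime_from_primes[OF sf])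
    have z: "a i \<in> Zmod n" unfolding Zmod_def a_def using n0 by simp
    have "jacobi_sym n (a i) = (\<Prod>p\<in>?P. Legendre (a i) (int p))" by (rule jacobi_sf[OF sf])
    also have "\<dots> = (\<Prod>p\<in>?P. Legendre (w i p) (int p))"
      by (rule prod.cong) (auto intro: Leg_cong acong)
    also have "\<dots> = 1" using wl i by blast
    finally show ?thesis unfolding Sgrp_def Umod_def using c z by blast
  qed
  have sum: "[(\<Sum>i\<in>I. a i * xs!i) = 0] (mod int n)"
  proof -
    have "\<forall>p\<in>?P. int p dvd (\<Sum>i\<in>I. a i * xs!i)"
    proof
      fix p assume p: "p \<in> ?P"
      have "[(\<Sum>i\<in>I. a i * xs!i) = (\<Sum>i\<in>I. w i p * xs!i)] (mod int p)"
        by (rule cong_sum) (intro cong_mult acong[OF p] cong_refl)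
      then have "[(\<Sum>i\<in>I. a i * xs!i) = 0] (mod int p)" using ws p cong_trans by blast
      then show "int p dvd (\<Sum>i\<in>I. a i * xs!i)" by (simp add: cong_0_iff)
    qed
    then show ?thesis using all_primes_dvd[OF sf] by (simp add: cong_0_iff)
  qed
  show ?thesis unfolding has_wzs_def using I aS sum by blast
qed




lemma fix_signs:
  fixes n :: nat and xs :: "int list" and I :: "nat set" and w :: "nat \<Rightarrow> nat \<Rightarrow> int"
  assumes sf: "squarefree n" and pr: "\<forall>p\<in>prime_factors n. p \<ge> 7"
    and I: "I \<subseteq> {..<length xs}" "I \<noteq> {}"
    and wu: "\<forall>i\<in>I. \<forall>p\<in>prime_factors n. \<not> int p dvd w i p"
    and ws: "\<forall>p\<in>prime_factors n. [(\<Sum>i\<in>I. w i p * xs!i) = 0] (mod int p)"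
    and wf: "\<forall>i\<in>I. (\<Prod>p\<in>prime_factors n. Legendre (w i p) (int p)) = 1 \<or>
                     (\<exists>r\<in>prime_factors n. int r dvd xs!i)"
  shows "has_wzs n (Sgrp n) xs"
proof -
  let ?P = "prime_factors n"
  have "\<forall>p. \<exists>g. p \<in> ?P \<longrightarrow> Legendre g (int p) = -1"
  proof
    fix p
    show "\<exists>g. p \<in> ?P \<longrightarrow> Legendre g (int p) = -1"
    proof (cases "p \<in> ?P")
      case True
      then have "prime p" "2 < p" using pr by auto
      then show ?thesis using nonres_exists by blast
    qed simp
  qed
  then have "\<exists>g. \<forall>p. p \<in> ?P \<longrightarrow> Legendre (g p) (int p) = -1" by (rule choice)
  then obtain g where g: "\<And>p. p \<in> ?P \<Longrightarrow> Legendre (g p) (int p) = -1" by blast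
  define r where "r i = (SOME r. r \<in> ?P \<and> int r dvd xs!i)" for i
  define flag where "flag i = ((\<Prod>p\<in>?P. Legendre (w i p) (int p)) \<noteq> 1)" for i
  define w' where "w' i p = (if flag i \<and> p = r i then w i p * g p else w i p)" for i p
  have rprop: "r i \<in> ?P \<and> int (r i) dvd xs!i" if "i \<in> I" "flag i" for i
  proof -
    have "\<exists>r\<in>?P. int r dvd xs!i" using wf that unfolding flag_def by blast
    then have "\<exists>r. r \<in> ?P \<and> int r dvd xs!i" by blast
    then show ?thesis unfolding r_def by (rule someI_ex)
  qed
  have wl: "\<forall>i\<in>I. (\<Prod>p\<in>?P. Legendre (w' i p) (int p)) = 1"
  proof
    fix i assume i: "i \<in> I"
    show "(\<Prod>p\<in>?P. Legendre (w' i p) (int p)) = 1"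
    proof (cases "flag i")
      case False
      then show ?thesis unfolding w'_def flag_def by simp
    next
      case True
      have ri: "r i \<in> ?P" using rprop[OF i True] by blast
      have "(\<Prod>p\<in>?P. Legendre (w' i p) (int p)) =
            (\<Prod>p\<in>?P. Legendre (w i p) (int p) * (if p = r i then Legendre (g p) (int p) else 1))"
      proof (rule prod.cong)
        fix p assume p: "p \<in> ?P"
        show "Legendre (w' i p) (int p) =
            Legendre (w i p) (int p) * (if p = r i then Legendre (g p) (int p) else 1)"
        proof -
          have "prime (r i)" "2 < r i" using ri pr by auto
          then show ?thesis unfolding w'_def using True Leg_mult[OF \<open>prime (r i)\<close> \<open>2 < r i\<close>] by simp
        qed
      qed simp
      also have "\<dots> = (\<Prod>p\<in>?P. Legendre (w i p) (int p)) *
                        (\<Prod>p\<in>?P. (if p = r i then Legendre (g p) (int p) else 1))"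
        by (rule prod.distrib)
      also have "(\<Prod>p\<in>?P. (if p = r i then Legendre (g p) (int p) else 1)) = Legendre (g (r i)) (int (r i))"
        using ri by (simp add: prod.delta)
      also have "\<dots> = -1" using g ri by blast
      also have "(\<Prod>p\<in>?P. Legendre (w i p) (int p)) = -1"
      proof -
        have "(\<Prod>p\<in>?P. Legendre (w i p) (int p)) \<in> {1,-1}"
          by (rule prod_pm1) (use wu i Leg_unit' in blast)+
        then show ?thesis using True unfolding flag_def by blast
      qed
      finally show ?thesis by simp
    qed
  qed
  have ws': "\<forall>p\<in>?P. [(\<Sum>i\<in>I. w' i p * xs!i) = 0] (mod int p)"
  proof
    fix p assume p: "p \<in> ?P"
    have "[(\<Sum>i\<in>I. w' i p * xs!i) = (\<Sum>i\<in>I. w i p * xs!i)] (mod int p)"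
    proof (rule cong_sum)
      fix i assume i: "i \<in> I"
      show "[w' i p * xs!i = w i p * xs!i] (mod int p)"
      proof (cases "flag i \<and> p = r i")
        case True
        then have "int p dvd xs!i" using rprop[OF i] by blast
        then have "[w' i p * xs!i = 0] (mod int p)" "[w i p * xs!i = 0] (mod int p)"
          by (auto simp: cong_0_iff)
        then show ?thesis using cong_sym cong_trans by blast
      next
        case False
        then have "w' i p = w i p" unfolding w'_def by (intro if_not_P)
        then show ?thesis by simp
      qed
    qed
    then show "[(\<Sum>i\<in>I. w' i p * xs!i) = 0] (mod int p)" using ws p cong_trans by blast
  qed
  show ?thesis by (rule glue[OF sf I wl ws'])
qed




lemma comb:
  fixes P :: "'a set" and E :: "'b set" and cov :: "'b \<Rightarrow> 'a \<Rightarrow> bool"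
  assumes "finite P" "finite E" "card P < card E"
  shows "\<exists>I\<subseteq>E. I \<noteq> {} \<and> (\<forall>p\<in>P. card {i\<in>I. cov i p} \<noteq> 1)"
  using assms
proof (induction "card P" arbitrary: P E rule: less_induct)
  case less
  show ?case
  proof (cases "\<forall>p\<in>P. card {i\<in>E. cov i p} \<noteq> 1")
    case True
    moreover have "E \<noteq> {}" using less.prems by auto
    ultimately show ?thesis by blast
  next
    case False
    then obtain p where p: "p \<in> P" "card {i\<in>E. cov i p} = 1" by blast
    then obtain j where j: "{i\<in>E. cov i p} = {j}" using card_1_singletonE by blast
    have jE: "j \<in> E" using j by blast
    have "card P > 0" using p less.prems by (auto simp: card_gt_0_iff)
    then have c1: "card (P - {p}) < card P" using p less.prems by simp
    have c2: "card (P - {p}) < card (E - {j})" using p jE less.prems \<open>card P > 0\<close> by simp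
    obtain I where I: "I \<subseteq> E - {j}" "I \<noteq> {}" "\<forall>q\<in>P - {p}. card {i\<in>I. cov i q} \<noteq> 1"
      using less.hyps[OF c1 _ _ c2] less.prems by blast
    have "{i\<in>I. cov i p} = {}" using I(1) j by blast
    then have "\<forall>q\<in>P. card {i\<in>I. cov i q} \<noteq> 1"
    proof -
      assume e: "{i\<in>I. cov i p} = {}"
      show ?thesis
      proof
        fix q assume q: "q \<in> P"
        show "card {i\<in>I. cov i q} \<noteq> 1"
        proof (cases "q = p")
          case True
          then show ?thesis unfolding True e by simp
        next
          case False
          then show ?thesis using I(3) q by blast
        qed
      qed
    qed
    then show ?thesis using I by blast
  qed
qed

lemma local_C:
  fixes p :: nat and I :: "nat set" and x :: "nat \<Rightarrow> int"
  assumes "prime p" "p \<ge> 7" "finite I"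
    and C: "card {i\<in>I. \<not> int p dvd x i} \<noteq> 1"
    and j: "{i\<in>I. \<not> int p dvd x i} \<noteq> {} \<Longrightarrow> j \<in> I \<and> \<not> int p dvd x j"
  shows "\<exists>w. (\<forall>i\<in>I. \<not> int p dvd w i) \<and> (\<forall>i\<in>I - {j}. Legendre (w i) (int p) = 1) \<and>
             [(\<Sum>i\<in>I. w i * x i) = 0] (mod int p)"
proof (cases "{i\<in>I. \<not> int p dvd x i} = {}")
  case True
  have "\<not> int p dvd 1" using assms by simp
  moreover have "Legendre 1 (int p) = 1" by (rule Leg_1[OF assms(1)])
  moreover have "[(\<Sum>i\<in>I. 1 * x i) = 0] (mod int p)"
  proof -
    have "\<forall>i\<in>I. int p dvd x i" using True by blast
    then have "int p dvd (\<Sum>i\<in>I. x i)" by (simp add: dvd_sum)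
    then show ?thesis by (simp add: cong_0_iff)
  qed
  ultimately show ?thesis by (intro exI[of _ "\<lambda>_. 1"]) auto
next
  case False
  let ?C = "{i\<in>I. \<not> int p dvd x i}"
  have jj: "j \<in> I" "\<not> int p dvd x j" using j False by auto
  have pi: "prime (int p)" using assms by simp
  have fC: "finite ?C" using assms(3) by simp
  have "card ?C \<noteq> 0" using False fC by simp
  then have "card ?C \<ge> 2" using C by linarith
  then have "card (?C - {j}) \<ge> 1" using jj fC by simp
  then have "?C - {j} \<noteq> {}" by (intro notI) simp
  then obtain d where d: "d \<in> ?C" "d \<noteq> j" by blast
  define D where "D = I - {j}"
  have dD: "d \<in> D" using d unfolding D_def by blast
  have fD: "finite D" using assms(3) unfolding D_def by simp
  define s where "s = (\<Sum>i\<in>D. x i)"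
  define v :: "nat \<Rightarrow> int" where "v i = (if \<not> int p dvd s then 1 else if i = d then 4 else 1)" for i
  have vL: "Legendre (v i) (int p) = 1" "\<not> int p dvd v i" for i
  proof -
    have n2: "\<not> int p dvd 2" using small_ndvd[OF assms(1,2), of 2] by simp
    have "Legendre (2*2) (int p) = 1" by (rule Leg_sq[OF assms(1) n2])
    moreover have "\<not> int p dvd 4" using small_ndvd[OF assms(1,2), of 4] by simp
    moreover have "\<not> int p dvd 1" using assms by simp
    ultimately show "Legendre (v i) (int p) = 1" "\<not> int p dvd v i"
      unfolding v_def using Leg_1[OF assms(1)] by auto
  qed
  define t where "t = (\<Sum>i\<in>D. v i * x i)"
  have tnz: "\<not> int p dvd t"
  proof (cases "int p dvd s")
    case False
    then have "t = s" unfolding t_def s_def v_def by simp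
    then show ?thesis using False by simp
  next
    case True
    have "t = (\<Sum>i\<in>D. x i) + 3 * x d"
    proof -
      have "t = v d * x d + (\<Sum>i\<in>D - {d}. v i * x i)" unfolding t_def
        using sum.remove[OF fD dD] by simp
      also have "(\<Sum>i\<in>D - {d}. v i * x i) = (\<Sum>i\<in>D - {d}. x i)"
        by (rule sum.cong) (auto simp: v_def True)
      also have "v d * x d = x d + 3 * x d" unfolding v_def using True by simp
      finally have "t = x d + (\<Sum>i\<in>D - {d}. x i) + 3 * x d" by simp
      moreover have "(\<Sum>i\<in>D. x i) = x d + (\<Sum>i\<in>D - {d}. x i)" using sum.remove[OF fD dD] by simp
      ultimately show ?thesis by simp
    qed
    moreover have "\<not> int p dvd 3 * x d"
      using prime_dvd_mult_iff[OF pi] small_ndvd[OF assms(1,2), of 3] d by auto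
    ultimately show ?thesis using True unfolding s_def by (simp add: dvd_add_right_iff)
  qed
  obtain xj' where xj': "[x j * xj' = 1] (mod int p)" using inv_exists[OF assms(1) jj(2)] by blast
  have nxj': "\<not> int p dvd xj'" using inv_leg(3)[OF assms(1) _ xj'] assms by simp
  define w where "w i = (if i = j then - t * xj' else v i)" for i
  have "\<forall>i\<in>I. \<not> int p dvd w i"
  proof
    fix i assume "i \<in> I"
    show "\<not> int p dvd w i"
    proof (cases "i = j")
      case True
      then have "w i = - (t * xj')" unfolding w_def by simp
      then show ?thesis using tnz nxj' prime_dvd_mult_iff[OF pi] by simp
    next
      case False
      then show ?thesis unfolding w_def using vL by simp
    qed
  qed
  moreover have "\<forall>i\<in>I - {j}. Legendre (w i) (int p) = 1" unfolding w_def using vL by simp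
  moreover have "[(\<Sum>i\<in>I. w i * x i) = 0] (mod int p)"
  proof -
    have "(\<Sum>i\<in>I. w i * x i) = w j * x j + (\<Sum>i\<in>D. w i * x i)"
      unfolding D_def using sum.remove[OF assms(3) jj(1)] by simp
    also have "(\<Sum>i\<in>D. w i * x i) = t" unfolding t_def D_def w_def by (rule sum.cong) auto
    also have "w j * x j = - t * (x j * xj')" unfolding w_def by (simp add: algebra_simps)
    finally have e: "(\<Sum>i\<in>I. w i * x i) = - t * (x j * xj') + t" .
    have "[- t * (x j * xj') + t = - t * 1 + t] (mod int p)"
      by (intro cong_add cong_mult cong_refl xj')
    then show ?thesis unfolding e by simp
  qed
  ultimately show ?thesis by blast
qed




lemma caseA:
  fixes n :: nat and xs :: "int list"
  assumes sf: "squarefree n" and pr: "\<forall>p\<in>prime_factors n. p \<ge> 7"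
    and idx: "i1 < length xs" "i2 < length xs" "i3 < length xs" "i1 \<noteq> i2" "i1 \<noteq> i3" "i2 \<noteq> i3"
    and u: "\<forall>p\<in>prime_factors n. \<not> int p dvd xs!i1 \<and> \<not> int p dvd xs!i2 \<and> \<not> int p dvd xs!i3"
  shows "has_wzs n (Sgrp n) xs"
proof -
  let ?P = "prime_factors n"
  have "\<forall>p. \<exists>W. p \<in> ?P \<longrightarrow> (Legendre (fst W) (int p) = 1 \<and> Legendre (fst (snd W)) (int p) = 1 \<and>
          Legendre (snd (snd W)) (int p) = 1 \<and>
          [fst W * xs!i1 + fst (snd W) * xs!i2 + snd (snd W) * xs!i3 = 0] (mod int p))"
  proof
    fix p
    show "\<exists>W. p \<in> ?P \<longrightarrow> (Legendre (fst W) (int p) = 1 \<and> Legendre (fst (snd W)) (int p) = 1 \<and>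
          Legendre (snd (snd W)) (int p) = 1 \<and>
          [fst W * xs!i1 + fst (snd W) * xs!i2 + snd (snd W) * xs!i3 = 0] (mod int p))"
    proof (cases "p \<in> ?P")
      case True
      then have "prime p" "p \<ge> 7" using pr by auto
      then obtain a b c where "Legendre a (int p) = 1" "Legendre b (int p) = 1" "Legendre c (int p) = 1"
          "[a * xs!i1 + b * xs!i2 + c * xs!i3 = 0] (mod int p)"
        using N2[of p 1 1 1 "xs!i1" "xs!i2" "xs!i3"] u True by auto
      then show ?thesis by (intro exI[of _ "(a,b,c)"]) simp
    qed simp
  qed
  then have "\<exists>W. \<forall>p. p \<in> ?P \<longrightarrow> (Legendre (fst (W p)) (int p) = 1 \<and> Legendre (fst (snd (W p))) (int p) = 1 \<and>
          Legendre (snd (snd (W p))) (int p) = 1 \<and>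
          [fst (W p) * xs!i1 + fst (snd (W p)) * xs!i2 + snd (snd (W p)) * xs!i3 = 0] (mod int p))"
    by (rule choice)
  then obtain W where W: "\<And>p. p \<in> ?P \<Longrightarrow> Legendre (fst (W p)) (int p) = 1 \<and> Legendre (fst (snd (W p))) (int p) = 1 \<and>
          Legendre (snd (snd (W p))) (int p) = 1 \<and>
          [fst (W p) * xs!i1 + fst (snd (W p)) * xs!i2 + snd (snd (W p)) * xs!i3 = 0] (mod int p)"
    by blast
  define w where "w i p = (if i = i1 then fst (W p) else if i = i2 then fst (snd (W p)) else snd (snd (W p)))" for i p
  let ?I = "{i1, i2, i3}"
  have I: "?I \<subseteq> {..<length xs}" "?I \<noteq> {}" using idx by auto
  have wl: "\<forall>i\<in>?I. (\<Prod>p\<in>?P. Legendre (w i p) (int p)) = 1"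
  proof
    fix i assume i: "i \<in> ?I"
    have "(\<Prod>p\<in>?P. Legendre (w i p) (int p)) = (\<Prod>p\<in>?P. 1)"
    proof (rule prod.cong)
      fix p assume p: "p \<in> ?P"
      show "Legendre (w i p) (int p) = 1" unfolding w_def using W[OF p] by simp
    qed simp
    then show "(\<Prod>p\<in>?P. Legendre (w i p) (int p)) = 1" by simp
  qed
  have ws: "\<forall>p\<in>?P. [(\<Sum>i\<in>?I. w i p * xs!i) = 0] (mod int p)"
  proof
    fix p assume p: "p \<in> ?P"
    have "(\<Sum>i\<in>?I. w i p * xs!i) = fst (W p) * xs!i1 + fst (snd (W p)) * xs!i2 + snd (snd (W p)) * xs!i3"
      using idx unfolding w_def by (simp add: algebra_simps)
    then show "[(\<Sum>i\<in>?I. w i p * xs!i) = 0] (mod int p)" using W[OF p] by simp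
  qed
  show ?thesis by (rule glue[OF sf I wl ws])
qed




lemma caseZ:
  fixes n :: nat and xs :: "int list"
  assumes sf: "squarefree n" and pr: "\<forall>p\<in>prime_factors n. p \<ge> 7"
    and ne: "prime_factors n \<noteq> {}"
    and l: "l < length xs" "\<forall>p\<in>prime_factors n. int p dvd xs!l"
  shows "has_wzs n (Sgrp n) xs"
proof -
  let ?P = "prime_factors n"
  have I: "{l} \<subseteq> {..<length xs}" "{l} \<noteq> {}" using l by auto
  have wu: "\<forall>i\<in>{l}. \<forall>p\<in>?P. \<not> int p dvd (\<lambda>i p. 1) i p"
  proof (intro ballI)
    fix i p assume "p \<in> ?P"
    then have "prime p" by auto
    then have "p > 1" by (rule prime_gt_1_nat)
    then show "\<not> int p dvd (\<lambda>i p. 1) i p" by simp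
  qed
  have ws: "\<forall>p\<in>?P. [(\<Sum>i\<in>{l}. (\<lambda>i p. 1::int) i p * xs!i) = 0] (mod int p)"
    using l(2) by (simp add: cong_0_iff)
  have wf: "\<forall>i\<in>{l}. (\<Prod>p\<in>?P. Legendre ((\<lambda>i p. 1) i p) (int p)) = 1 \<or> (\<exists>r\<in>?P. int r dvd xs!i)"
    using l(2) ne by blast
  show ?thesis by (rule fix_signs[OF sf pr I wu ws wf])
qed




lemma Leg_nz_ndvd: "Legendre a p \<noteq> 0 \<Longrightarrow> \<not> p dvd a"
  using Leg_0_iff by blast

lemma caseB2:
  fixes n :: nat and xs :: "int list"
  assumes sf: "squarefree n" and pr: "\<forall>p\<in>prime_factors n. p \<ge> 7"
    and idx: "i1 < length xs" "i2 < length xs" "l < length xs" "i1 \<noteq> i2" "i1 \<noteq> l" "i2 \<noteq> l"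
    and u: "\<forall>p\<in>prime_factors n. \<not> int p dvd xs!i1 \<and> \<not> int p dvd xs!i2"
    and q: "q \<in> prime_factors n" "\<not> int q dvd xs!l"
    and r: "r \<in> prime_factors n" "int r dvd xs!l"
  shows "has_wzs n (Sgrp n) xs"
proof -
  let ?P = "prime_factors n"
  define G where "G p W \<longleftrightarrow> \<not> int p dvd fst W \<and> \<not> int p dvd fst (snd W) \<and> \<not> int p dvd snd (snd W) \<and>
      Legendre (fst W) (int p) = 1 \<and> Legendre (snd (snd W)) (int p) = 1 \<and>
      [fst W * xs!i1 + fst (snd W) * xs!i2 + snd (snd W) * xs!l = 0] (mod int p)" for p W
  have "\<forall>p. \<exists>W. p \<in> ?P \<longrightarrow> G p W"
  proof
    fix p
    show "\<exists>W. p \<in> ?P \<longrightarrow> G p W"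
    proof (cases "p \<in> ?P")
      case True
      then have pp: "prime p" "p \<ge> 7" using pr by auto
      have u1: "\<not> int p dvd xs!i1" and u2: "\<not> int p dvd xs!i2" using u True by auto
      show ?thesis
      proof (cases "int p dvd xs!l")
        case True
        obtain x2' where x2': "[xs!i2 * x2' = 1] (mod int p)" using inv_exists[OF pp(1) u2] by blast
        have pi: "prime (int p)" using pp by simp
        have n1: "\<not> int p dvd 1" using pp prime_gt_1_nat by simp
        have nb: "\<not> int p dvd (- (xs!i1 * x2'))"
          using inv_leg(3)[OF pp(1) _ x2'] pp u1 prime_dvd_mult_iff[OF pi] by simp
        have "[1 * xs!i1 + (- (xs!i1 * x2')) * xs!i2 + 1 * xs!l = xs!i1 - xs!i1 * (xs!i2 * x2') + 0] (mod int p)"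
        proof -
          have eq: "1 * xs!i1 + (- (xs!i1 * x2')) * xs!i2 + 1 * xs!l = xs!i1 - xs!i1 * (xs!i2 * x2') + xs!l"
            by (simp add: algebra_simps)
          have "[xs!i1 - xs!i1 * (xs!i2 * x2') + xs!l = xs!i1 - xs!i1 * (xs!i2 * x2') + 0] (mod int p)"
            using True by (intro cong_add cong_refl) (simp add: cong_0_iff)
          then show ?thesis unfolding eq .
        qed
        moreover have "[xs!i1 - xs!i1 * (xs!i2 * x2') + 0 = xs!i1 - xs!i1 * 1 + 0] (mod int p)"
          by (intro cong_add cong_diff cong_mult cong_refl x2')
        ultimately have "[1 * xs!i1 + (- (xs!i1 * x2')) * xs!i2 + 1 * xs!l = 0] (mod int p)"
          using cong_trans by fastforce
        then have "G p (1, - (xs!i1 * x2'), 1)" unfolding G_def using n1 nb Leg_1[OF pp(1)] by simp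
        then show ?thesis by blast
      next
        case False
        obtain a b c where abc: "Legendre a (int p) = 1" "Legendre b (int p) = 1" "Legendre c (int p) = 1"
            "[a * xs!i1 + b * xs!i2 + c * xs!l = 0] (mod int p)"
          using N2[OF pp, of 1 1 1 "xs!i1" "xs!i2" "xs!l"] u1 u2 False by auto
        have "\<not> int p dvd a" "\<not> int p dvd b" "\<not> int p dvd c" using abc Leg_nz_ndvd by fastforce+
        then have "G p (a, b, c)" unfolding G_def using abc by simp
        then show ?thesis by blast
      qed
    qed simp
  qed
  then have "\<exists>W0. \<forall>p. p \<in> ?P \<longrightarrow> G p (W0 p)" by (rule choice)
  then obtain W0 where W0: "\<And>p. p \<in> ?P \<Longrightarrow> G p (W0 p)" by blast
  define e where "e = (\<Prod>p\<in>?P - {q}. Legendre (fst (snd (W0 p))) (int p))"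
  have e: "e \<in> {1,-1}" unfolding e_def
  proof (rule prod_pm1)
    show "\<forall>x\<in>?P - {q}. Legendre (fst (snd (W0 x))) (int x) \<in> {1, - 1}"
      using W0 Leg_unit' unfolding G_def by blast
  qed simp
  have qq: "prime q" "q \<ge> 7" using q pr by auto
  have uq: "\<not> int q dvd xs!i1" "\<not> int q dvd xs!i2" using u q by auto
  obtain a' b' c' where abc': "Legendre a' (int q) = 1" "Legendre b' (int q) = e" "Legendre c' (int q) = 1"
       "[a' * xs!i1 + b' * xs!i2 + c' * xs!l = 0] (mod int q)"
    using N2[OF qq, of 1 e 1 "xs!i1" "xs!i2" "xs!l"] uq q(2) e by auto
  have "\<not> int q dvd a'" "\<not> int q dvd b'" "\<not> int q dvd c'" using abc' e Leg_nz_ndvd by fastforce+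
  then have Gq: "G q (a', b', c')" unfolding G_def using abc' by simp
  define W where "W p = (if p = q then (a', b', c') else W0 p)" for p
  have GW: "G p (W p)" if "p \<in> ?P" for p using W0[OF that] Gq unfolding W_def by simp
  define w where "w i p = (if i = i1 then fst (W p) else if i = i2 then fst (snd (W p)) else snd (snd (W p)))" for i p
  let ?I = "{i1, i2, l}"
  have I: "?I \<subseteq> {..<length xs}" "?I \<noteq> {}" using idx by auto
  have wu: "\<forall>i\<in>?I. \<forall>p\<in>?P. \<not> int p dvd w i p"
    using GW idx unfolding w_def G_def by auto
  have ws: "\<forall>p\<in>?P. [(\<Sum>i\<in>?I. w i p * xs!i) = 0] (mod int p)"
  proof
    fix p assume p: "p \<in> ?P"
    have "(\<Sum>i\<in>?I. w i p * xs!i) = fst (W p) * xs!i1 + fst (snd (W p)) * xs!i2 + snd (snd (W p)) * xs!l"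
      using idx unfolding w_def by (simp add: algebra_simps)
    then show "[(\<Sum>i\<in>?I. w i p * xs!i) = 0] (mod int p)" using GW[OF p] unfolding G_def by simp
  qed
  have wf: "\<forall>i\<in>?I. (\<Prod>p\<in>?P. Legendre (w i p) (int p)) = 1 \<or> (\<exists>r\<in>?P. int r dvd xs!i)"
  proof
    fix i assume i: "i \<in> ?I"
    show "(\<Prod>p\<in>?P. Legendre (w i p) (int p)) = 1 \<or> (\<exists>r\<in>?P. int r dvd xs!i)"
    proof (cases "i = l")
      case True
      then show ?thesis using r by blast
    next
      case False
      show ?thesis
      proof (cases "i = i1")
        case True
        have "(\<Prod>p\<in>?P. Legendre (w i p) (int p)) = (\<Prod>p\<in>?P. 1)"
          by (rule prod.cong) (use GW True in \<open>auto simp: w_def G_def\<close>)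
        then show ?thesis by simp
      next
        case False
        then have ii: "i = i2" using i \<open>i \<noteq> l\<close> by blast
        have fP: "finite ?P" by simp
        have "(\<Prod>p\<in>?P. Legendre (w i p) (int p)) =
              Legendre (w i q) (int q) * (\<Prod>p\<in>?P - {q}. Legendre (w i p) (int p))"
          by (rule prod.remove[OF fP q(1)])
        also have "Legendre (w i q) (int q) = e" unfolding w_def W_def using ii idx abc' by simp
        also have "(\<Prod>p\<in>?P - {q}. Legendre (w i p) (int p)) = e"
          unfolding e_def by (rule prod.cong) (use ii idx in \<open>auto simp: w_def W_def\<close>)
        finally show ?thesis using e by auto
      qed
    qed
  qed
  show ?thesis by (rule fix_signs[OF sf pr I wu ws wf])
qed




lemma caseC:
  fixes n :: nat and xs :: "int list"
  assumes sf: "squarefree n" and pr: "\<forall>p\<in>prime_factors n. p \<ge> 7"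
    and len: "card (prime_factors n) < length xs"
    and U: "\<And>i j. i < length xs \<Longrightarrow> j < length xs \<Longrightarrow> (\<forall>p\<in>prime_factors n. \<not> int p dvd xs!i) \<Longrightarrow>
              (\<forall>p\<in>prime_factors n. \<not> int p dvd xs!j) \<Longrightarrow> i = j"
  shows "has_wzs n (Sgrp n) xs"
proof -
  let ?P = "prime_factors n"
  define unit where "unit i \<longleftrightarrow> (\<forall>p\<in>?P. \<not> int p dvd xs!i)" for i
  obtain I where I: "I \<subseteq> {..<length xs}" "I \<noteq> {}" "\<forall>p\<in>?P. card {i\<in>I. \<not> int p dvd xs!i} \<noteq> 1"
    using comb[of ?P "{..<length xs}" "\<lambda>i p. \<not> int p dvd xs!i"] len by auto
  have fI: "finite I" using I(1) finite_subset by blast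
  have "\<forall>p. \<exists>JW. p \<in> ?P \<longrightarrow>
      (({i\<in>I. \<not> int p dvd xs!i} \<noteq> {} \<longrightarrow> fst JW \<in> I \<and> \<not> int p dvd xs!(fst JW) \<and> \<not> unit (fst JW)) \<and>
       (\<forall>i\<in>I. \<not> int p dvd snd JW i) \<and> (\<forall>i\<in>I - {fst JW}. Legendre (snd JW i) (int p) = 1) \<and>
       [(\<Sum>i\<in>I. snd JW i * xs!i) = 0] (mod int p))"
  proof
    fix p
    show "\<exists>JW. p \<in> ?P \<longrightarrow>
      (({i\<in>I. \<not> int p dvd xs!i} \<noteq> {} \<longrightarrow> fst JW \<in> I \<and> \<not> int p dvd xs!(fst JW) \<and> \<not> unit (fst JW)) \<and>
       (\<forall>i\<in>I. \<not> int p dvd snd JW i) \<and> (\<forall>i\<in>I - {fst JW}. Legendre (snd JW i) (int p) = 1) \<and>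
       [(\<Sum>i\<in>I. snd JW i * xs!i) = 0] (mod int p))"
    proof (cases "p \<in> ?P")
      case True
      then have pp: "prime p" "p \<ge> 7" using pr by auto
      let ?C = "{i\<in>I. \<not> int p dvd xs!i}"
      have "\<exists>j. ?C \<noteq> {} \<longrightarrow> j \<in> I \<and> \<not> int p dvd xs!j \<and> \<not> unit j"
      proof (cases "?C = {}")
        case False
        have fC: "finite ?C" using fI by simp
        have "card ?C \<noteq> 0" using False fC by simp
        moreover have "card ?C \<noteq> 1" using I(3) True by blast
        ultimately have "card ?C \<ge> 2" by linarith
        obtain a where a: "a \<in> ?C" using False by blast
        have "card (?C - {a}) \<ge> 1" using \<open>card ?C \<ge> 2\<close> a fC by simp
        then have "?C - {a} \<noteq> {}" by (intro notI) simp
        then obtain b where "b \<in> ?C - {a}" by blast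
        then have ab: "a \<in> ?C" "b \<in> ?C" "a \<noteq> b" using a by auto
        have "\<not> unit a \<or> \<not> unit b"
        proof (rule ccontr)
          assume "\<not> (\<not> unit a \<or> \<not> unit b)"
          then have "unit a" "unit b" by auto
          moreover have "a < length xs" "b < length xs" using ab I(1) by auto
          ultimately have "a = b" using U unfolding unit_def by blast
          then show False using ab by simp
        qed
        then show ?thesis using ab by blast
      qed simp
      then obtain j where j: "?C \<noteq> {} \<Longrightarrow> j \<in> I \<and> \<not> int p dvd xs!j \<and> \<not> unit j" by blast
      obtain wp where wp: "\<forall>i\<in>I. \<not> int p dvd wp i" "\<forall>i\<in>I - {j}. Legendre (wp i) (int p) = 1"
          "[(\<Sum>i\<in>I. wp i * xs!i) = 0] (mod int p)"
        using local_C[OF pp fI, of "\<lambda>i. xs!i" j] I(3) True j by blast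
      show ?thesis
        by (rule exI[of _ "(j, wp)"]) (use j wp in simp)
    qed simp
  qed
  then have "\<exists>JW. \<forall>p. p \<in> ?P \<longrightarrow>
      (({i\<in>I. \<not> int p dvd xs!i} \<noteq> {} \<longrightarrow> fst (JW p) \<in> I \<and> \<not> int p dvd xs!(fst (JW p)) \<and> \<not> unit (fst (JW p))) \<and>
       (\<forall>i\<in>I. \<not> int p dvd snd (JW p) i) \<and> (\<forall>i\<in>I - {fst (JW p)}. Legendre (snd (JW p) i) (int p) = 1) \<and>
       [(\<Sum>i\<in>I. snd (JW p) i * xs!i) = 0] (mod int p))"
    by (rule choice)
  then obtain JW where JW: "\<And>p. p \<in> ?P \<Longrightarrow>
      (({i\<in>I. \<not> int p dvd xs!i} \<noteq> {} \<longrightarrow> fst (JW p) \<in> I \<and> \<not> int p dvd xs!(fst (JW p)) \<and> \<not> unit (fst (JW p))) \<and>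
       (\<forall>i\<in>I. \<not> int p dvd snd (JW p) i) \<and> (\<forall>i\<in>I - {fst (JW p)}. Legendre (snd (JW p) i) (int p) = 1) \<and>
       [(\<Sum>i\<in>I. snd (JW p) i * xs!i) = 0] (mod int p))"
    by blast
  define w where "w i p = snd (JW p) i" for i p
  have wu: "\<forall>i\<in>I. \<forall>p\<in>?P. \<not> int p dvd w i p" unfolding w_def using JW by blast
  have ws: "\<forall>p\<in>?P. [(\<Sum>i\<in>I. w i p * xs!i) = 0] (mod int p)" unfolding w_def using JW by blast
  have wf: "\<forall>i\<in>I. (\<Prod>p\<in>?P. Legendre (w i p) (int p)) = 1 \<or> (\<exists>r\<in>?P. int r dvd xs!i)"
  proof
    fix i assume i: "i \<in> I"
    show "(\<Prod>p\<in>?P. Legendre (w i p) (int p)) = 1 \<or> (\<exists>r\<in>?P. int r dvd xs!i)"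
    proof (cases "unit i")
      case False
      then show ?thesis unfolding unit_def by blast
    next
      case True
      have "(\<Prod>p\<in>?P. Legendre (w i p) (int p)) = (\<Prod>p\<in>?P. 1)"
      proof (rule prod.cong)
        fix p assume p: "p \<in> ?P"
        have "i \<in> {i\<in>I. \<not> int p dvd xs!i}" using True i p unfolding unit_def by blast
        then have "\<not> unit (fst (JW p))" using JW[OF p] by blast
        then have "i \<noteq> fst (JW p)" using True by blast
        then show "Legendre (w i p) (int p) = 1" unfolding w_def using JW[OF p] i by blast
      qed simp
      then show ?thesis by simp
    qed
  qed
  show ?thesis by (rule fix_signs[OF sf pr I(1,2) wu ws wf])
qed




lemma UB:
  fixes n :: nat and xs :: "int list"
  assumes sf: "squarefree n" and pr: "\<forall>p\<in>prime_factors n. p \<ge> 7"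
    and k2: "card (prime_factors n) \<ge> 2" and len: "card (prime_factors n) < length xs"
  shows "has_wzs n (Sgrp n) xs"
proof -
  let ?P = "prime_factors n"
  define unit where "unit i \<longleftrightarrow> (\<forall>p\<in>?P. \<not> int p dvd xs!i)" for i
  show ?thesis
  proof (cases "\<exists>i1 i2 i3. i1 < length xs \<and> i2 < length xs \<and> i3 < length xs \<and> i1 \<noteq> i2 \<and> i1 \<noteq> i3 \<and> i2 \<noteq> i3
                  \<and> unit i1 \<and> unit i2 \<and> unit i3")
    case True
    then obtain i1 i2 i3 where h: "i1 < length xs" "i2 < length xs" "i3 < length xs" "i1 \<noteq> i2" "i1 \<noteq> i3" "i2 \<noteq> i3"
        "unit i1" "unit i2" "unit i3" by blast
    show ?thesis by (rule caseA[OF sf pr h(1-6)]) (use h(7-9) in \<open>auto simp: unit_def\<close>)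
  next
    case no3: False
    show ?thesis
    proof (cases "\<exists>i1 i2. i1 < length xs \<and> i2 < length xs \<and> i1 \<noteq> i2 \<and> unit i1 \<and> unit i2")
      case True
      then obtain i1 i2 where h: "i1 < length xs" "i2 < length xs" "i1 \<noteq> i2" "unit i1" "unit i2" by blast
      have "card ({..<length xs} - {i1, i2}) \<ge> 1"
      proof -
        have "card ({..<length xs} - {i1, i2}) = length xs - 2" using h by (simp add: card_Diff_subset)
        then show ?thesis using k2 len by simp
      qed
      then have "{..<length xs} - {i1, i2} \<noteq> {}" by (intro notI) simp
      then obtain l where l: "l < length xs" "l \<noteq> i1" "l \<noteq> i2" by blast
      have nl: "\<not> unit l" using no3 h l by blast
      then obtain r where r: "r \<in> ?P" "int r dvd xs!l" unfolding unit_def by blast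
      show ?thesis
      proof (cases "\<forall>p\<in>?P. int p dvd xs!l")
        case True
        have "?P \<noteq> {}" using r by blast
        then show ?thesis using caseZ[OF sf pr _ l(1) True] by blast
      next
        case False
        then obtain q where q: "q \<in> ?P" "\<not> int q dvd xs!l" by blast
        have u: "\<forall>p\<in>?P. \<not> int p dvd xs!i1 \<and> \<not> int p dvd xs!i2" using h unfolding unit_def by blast
        show ?thesis by (rule caseB2[OF sf pr h(1,2) l(1) h(3) l(2)[symmetric] l(3)[symmetric] u q r])
      qed
    next
      case False
      show ?thesis
      proof (rule caseC[OF sf pr len])
        fix i j assume "i < length xs" "j < length xs" "\<forall>p\<in>?P. \<not> int p dvd xs!i" "\<forall>p\<in>?P. \<not> int p dvd xs!j"
        then show "i = j" using False unfolding unit_def by blast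
      qed
    qed
  qed
qed





lemma wzs_take:
  assumes "has_wzs m A (take j xs)"
  shows "has_wzs m A xs"
proof -
  obtain I a where h: "I \<subseteq> {..<length (take j xs)}" "I \<noteq> {}" "\<forall>i\<in>I. a i \<in> A"
      "[(\<Sum>i\<in>I. a i * take j xs ! i) = 0] (mod int m)"
    using assms unfolding has_wzs_def by blast
  have "(\<Sum>i\<in>I. a i * take j xs ! i) = (\<Sum>i\<in>I. a i * xs ! i)"
    by (rule sum.cong) (use h(1) in auto)
  moreover have "I \<subseteq> {..<length xs}" using h(1) by auto
  ultimately show ?thesis unfolding has_wzs_def using h(2,3,4) by (intro exI[of _ I] exI[of _ a]) simp
qed

lemma extremal_of:
  fixes n :: nat and xs :: "int list"
  assumes sf: "squarefree n" and pr: "\<forall>p\<in>prime_factors n. p \<ge> 7"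
    and k2: "card (prime_factors n) \<ge> 2"
    and xs: "set xs \<subseteq> Zmod n" "length xs = card (prime_factors n)" "\<not> has_wzs n (Sgrp n) xs"
  shows "extremal n (Sgrp n) xs"
proof -
  let ?k = "card (prime_factors n)"
  let ?Q = "\<lambda>k. \<forall>ys. length ys = k \<and> set ys \<subseteq> Zmod n \<longrightarrow> has_wzs n (Sgrp n) ys"
  have "(LEAST k. ?Q k) = ?k + 1"
  proof (rule Least_equality)
    show "?Q (?k + 1)" using UB[OF sf pr k2] by simp
  next
    fix j assume Qj: "?Q j"
    show "?k + 1 \<le> j"
    proof (rule ccontr)
      assume "\<not> ?k + 1 \<le> j"
      then have "j \<le> length xs" using xs(2) by simp
      then have "length (take j xs) = j" by simp
      moreover have "set (take j xs) \<subseteq> Zmod n" by (rule subset_trans[OF set_take_subset xs(1)])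
      ultimately have "has_wzs n (Sgrp n) (take j xs)" using Qj by blast
      then show False using wzs_take xs(3) by blast
    qed
  qed
  then have "davenport n (Sgrp n) = ?k + 1" unfolding davenport_def by simp
  then show ?thesis unfolding extremal_def using xs by simp
qed



lemma jacobi_one:
  assumes "squarefree (n::nat)"
  shows "jacobi_sym n 1 = 1"
  unfolding jacobi_sf[OF assms]
  by (rule prod.neutral) (auto intro: Leg_1)



lemma ndvd_mod:
  assumes "p \<in> prime_factors n" "\<not> int p dvd x"
  shows "\<not> int p dvd x mod int n"
proof
  assume h: "int p dvd x mod int n"
  have "int p dvd int n" using assms(1) by auto
  moreover have "[x mod int n = x] (mod int n)" by (simp add: cong_def)
  ultimately have "[x mod int n = x] (mod int p)" using cong_dvd_modulus by blast
  then have "[x = 0] (mod int p)" using h by (simp add: cong_0_iff cong_def)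
  then show False using assms(2) by (simp add: cong_0_iff)
qed

lemma mk_S:
  assumes sf: "squarefree (n::nat)" and "\<forall>p\<in>prime_factors n. \<not> int p dvd x" and "jacobi_sym n x = 1"
  shows "x mod int n \<in> Sgrp n"
proof -
  have n0: "n > 0" using sf_nz[OF sf] by simp
  have "\<forall>p\<in>prime_factors n. \<not> int p dvd x mod int n" using assms(2) ndvd_mod by blast
  then have c: "coprime (x mod int n) (int n)" by (rule coprime_from_primes[OF sf])
  have "jacobi_sym n (x mod int n) = jacobi_sym n x" by (rule jacobi_cong[OF sf]) (simp add: cong_def)
  moreover have "x mod int n \<in> Zmod n" unfolding Zmod_def using n0 by simp
  ultimately show ?thesis unfolding Sgrp_def Umod_def using c assms(3) by simp
qed

lemma equiv_wzs:
  fixes n :: nat and xs ys :: "int list"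
  assumes sf: "squarefree n" and pr: "\<forall>p\<in>prime_factors n. p \<ge> 7"
    and eq: "equiv_seq n (Sgrp n) xs ys" and wz: "has_wzs n (Sgrp n) xs"
  shows "has_wzs n (Sgrp n) ys"
proof -
  let ?P = "prime_factors n"
  obtain I b where Ib: "I \<subseteq> {..<length xs}" "I \<noteq> {}" "\<forall>i\<in>I. b i \<in> Sgrp n"
      "[(\<Sum>i\<in>I. b i * xs ! i) = 0] (mod int n)"
    using wz unfolding has_wzs_def by blast
  obtain a c \<sigma> where E: "length xs = length ys" "\<sigma> permutes {..<length xs}" "\<forall>i<length xs. a i \<in> Sgrp n"
      "c \<in> Umod n" "\<forall>i<length xs. [ys ! (\<sigma> i) = c * a i * xs ! i] (mod int n)"
    using eq unfolding equiv_seq_def by blast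
  have "\<forall>i. \<exists>a'. i < length xs \<longrightarrow> [a i * a' = 1] (mod int n)"
  proof
    fix i
    show "\<exists>a'. i < length xs \<longrightarrow> [a i * a' = 1] (mod int n)"
    proof (cases "i < length xs")
      case True
      then have "coprime (a i) (int n)" using E(3) unfolding Sgrp_def Umod_def by blast
      then show ?thesis using cong_solve_coprime_int by blast
    qed simp
  qed
  then have "\<exists>a'. \<forall>i. i < length xs \<longrightarrow> [a i * a' i = 1] (mod int n)" by (rule choice)
  then obtain a' where a': "\<And>i. i < length xs \<Longrightarrow> [a i * a' i = 1] (mod int n)" by blast
  have S: "(b i * a' i) mod int n \<in> Sgrp n" if i: "i \<in> I" for i
  proof -
    have il: "i < length xs" using i Ib(1) by auto
    have bS: "coprime (b i) (int n)" "jacobi_sym n (b i) = 1" using Ib(3) i unfolding Sgrp_def Umod_def by auto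
    have aS: "coprime (a i) (int n)" "jacobi_sym n (a i) = 1" using E(3) il unfolding Sgrp_def Umod_def by auto
    have nd: "\<forall>p\<in>?P. \<not> int p dvd b i * a' i"
    proof
      fix p assume p: "p \<in> ?P"
      have pi: "prime (int p)" using p by auto
      have "\<not> int p dvd a' i"
      proof
        assume "int p dvd a' i"
        then have "int p dvd a i * a' i" by simp
        moreover have "[a i * a' i = 1] (mod int p)"
        proof -
          have "int p dvd int n" using p by auto
          then show ?thesis using a'[OF il] cong_dvd_modulus by blast
        qed
        ultimately have "int p dvd 1" using cong_dvd_iff by blast
        then show False using pi by (simp add: prime_int_iff)
      qed
      moreover have "\<not> int p dvd b i" using coprime_ndvd[OF bS(1) p] .
      ultimately show "\<not> int p dvd b i * a' i" using prime_dvd_mult_iff[OF pi] by blast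
    qed
    have "jacobi_sym n (a i * a' i) = 1"
      using jacobi_cong[OF sf a'[OF il]] jacobi_one[OF sf] by simp
    then have "jacobi_sym n (a' i) = 1" using jacobi_mult[OF sf pr] aS(2) by simp
    then have "jacobi_sym n (b i * a' i) = 1" using jacobi_mult[OF sf pr] bS(2) by simp
    then show ?thesis using mk_S[OF sf nd] by blast
  qed
  define b' where "b' j = (b (inv_into UNIV \<sigma> j) * a' (inv_into UNIV \<sigma> j)) mod int n" for j
  have b'\<sigma>: "b' (\<sigma> i) = (b i * a' i) mod int n" for i
    unfolding b'_def using permutes_inverses(2)[OF E(2)] by simp
  have injs: "inj_on \<sigma> I" using permutes_inj_on[OF E(2)] .
  have J: "\<sigma> ` I \<subseteq> {..<length ys}"
  proof -
    have "\<sigma> ` I \<subseteq> \<sigma> ` {..<length xs}" using Ib(1) by (rule image_mono)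
    moreover have "\<sigma> ` {..<length xs} = {..<length xs}" by (rule permutes_image[OF E(2)])
    ultimately show ?thesis using E(1) by simp
  qed
  have J2: "\<sigma> ` I \<noteq> {}" using Ib(2) by simp
  have JS: "\<forall>j\<in>\<sigma> ` I. b' j \<in> Sgrp n"
  proof
    fix j assume "j \<in> \<sigma> ` I"
    then obtain i where "i \<in> I" "j = \<sigma> i" by blast
    then show "b' j \<in> Sgrp n" using S b'\<sigma> by simp
  qed
  have "(\<Sum>j\<in>\<sigma> ` I. b' j * ys ! j) = (\<Sum>i\<in>I. b' (\<sigma> i) * ys ! (\<sigma> i))"
    using sum.reindex[OF injs] by simp
  also have "[\<dots> = (\<Sum>i\<in>I. c * (b i * xs ! i))] (mod int n)"
  proof (rule cong_sum)
    fix i assume i: "i \<in> I"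
    have il: "i < length xs" using i Ib(1) by auto
    have "[b' (\<sigma> i) * ys ! (\<sigma> i) = (b i * a' i) * (c * a i * xs ! i)] (mod int n)"
      unfolding b'\<sigma> by (intro cong_mult E(5)[rule_format, OF il]) (simp add: cong_def)
    moreover have "(b i * a' i) * (c * a i * xs ! i) = c * (b i * xs ! i) * (a i * a' i)"
      by (simp add: algebra_simps)
    moreover have "[c * (b i * xs ! i) * (a i * a' i) = c * (b i * xs ! i) * 1] (mod int n)"
      by (intro cong_mult cong_refl a'[OF il])
    ultimately have "[b' (\<sigma> i) * ys ! (\<sigma> i) = c * (b i * xs ! i) * 1] (mod int n)"
      using cong_trans by metis
    then show "[b' (\<sigma> i) * ys ! (\<sigma> i) = c * (b i * xs ! i)] (mod int n)" by simp
  qed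
  also have "(\<Sum>i\<in>I. c * (b i * xs ! i)) = c * (\<Sum>i\<in>I. b i * xs ! i)"
    by (simp add: sum_distrib_left)
  also have "[\<dots> = c * 0] (mod int n)" by (intro cong_mult cong_refl Ib(4))
  finally have "[(\<Sum>j\<in>\<sigma> ` I. b' j * ys ! j) = 0] (mod int n)" by simp
  then show ?thesis unfolding has_wzs_def using J J2 JS by (intro exI[of _ "\<sigma> ` I"] exI[of _ b']) simp
qed



lemma part1_nowzs:
  fixes n :: nat and ys :: "int list" and p :: nat
  assumes sf: "squarefree n" and p: "p \<in> prime_factors n"
    and y0: "\<not> int p dvd ys ! 0" and yi: "\<forall>i\<in>{1..<length ys}. int p dvd ys ! i"
    and T: "\<not> has_wzs (n div p) (Umod (n div p)) (map (\<lambda>y. y mod int (n div p)) (tl ys))"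
  shows "\<not> has_wzs n (Sgrp n) ys"
proof
  assume "has_wzs n (Sgrp n) ys"
  then obtain I a where Ia: "I \<subseteq> {..<length ys}" "I \<noteq> {}" "\<forall>i\<in>I. a i \<in> Sgrp n"
      "[(\<Sum>i\<in>I. a i * ys ! i) = 0] (mod int n)"
    unfolding has_wzs_def by blast
  let ?m = "n div p"
  have pd: "p dvd n" using p by auto
  have n0: "n \<noteq> 0" using sf_nz[OF sf] .
  have nm: "n = p * ?m" using pd by simp
  have m0: "?m \<noteq> 0" using n0 nm by (metis mult_0_right)
  have pi: "prime (int p)" using p by auto
  have fI: "finite I" using Ia(1) finite_subset by blast
  have n0I: "0 \<notin> I"
  proof
    assume z: "0 \<in> I"
    have "(\<Sum>i\<in>I. a i * ys ! i) = a 0 * ys ! 0 + (\<Sum>i\<in>I - {0}. a i * ys ! i)"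
      using sum.remove[OF fI z] by simp
    moreover have "int p dvd (\<Sum>i\<in>I - {0}. a i * ys ! i)"
    proof (rule dvd_sum)
      fix i assume "i \<in> I - {0}"
      then have "i \<in> {1..<length ys}" using Ia(1) by auto
      then show "int p dvd a i * ys ! i" using yi by simp
    qed
    moreover have "int p dvd (\<Sum>i\<in>I. a i * ys ! i)"
    proof -
      have "int n dvd (\<Sum>i\<in>I. a i * ys ! i)" using Ia(4) by (simp add: cong_0_iff)
      moreover have "int p dvd int n" using pd by simp
      ultimately show ?thesis using dvd_trans by blast
    qed
    ultimately have "int p dvd a 0 * ys ! 0" by (simp add: dvd_add_left_iff)
    moreover have "\<not> int p dvd a 0"
      using Ia(3) z coprime_ndvd[OF _ p] unfolding Sgrp_def Umod_def by blast
    ultimately show False using y0 prime_dvd_mult_iff[OF pi] by blast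
  qed
  have I1: "\<forall>i\<in>I. 1 \<le> i \<and> i < length ys" using Ia(1) n0I
    by (metis lessThan_iff less_one not_le subsetD)
  let ?T = "map (\<lambda>y. y mod int ?m) (tl ys)"
  define J where "J = (\<lambda>i. i - 1) ` I"
  define b where "b j = a (Suc j) mod int ?m" for j
  have inj: "inj_on (\<lambda>i. i - 1) I"
  proof (rule inj_onI)
    fix x y assume "x \<in> I" "y \<in> I" "x - 1 = y - 1"
    moreover have "1 \<le> x" "1 \<le> y" using I1 calculation(1,2) by auto
    ultimately show "x = y" by linarith
  qed
  have J: "J \<subseteq> {..<length ?T}" unfolding J_def using I1 by auto
  have J2: "J \<noteq> {}" unfolding J_def using Ia(2) by simp
  have JU: "\<forall>j\<in>J. b j \<in> Umod ?m"
  proof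
    fix j assume "j \<in> J"
    then obtain i where i: "i \<in> I" "j = i - 1" unfolding J_def by blast
    then have si: "Suc j = i" using I1 by auto
    have "coprime (a i) (int n)" using Ia(3) i unfolding Sgrp_def Umod_def by blast
    then have "coprime (a i) (int ?m)" using nm
      by (metis coprime_mult_right_iff mult.commute of_nat_mult)
    then have "coprime (b j) (int ?m)" unfolding b_def si using m0 by simp
    moreover have "b j \<in> Zmod ?m" unfolding b_def Zmod_def using m0 by simp
    ultimately show "b j \<in> Umod ?m" unfolding Umod_def by blast
  qed
  have "(\<Sum>j\<in>J. b j * ?T ! j) = (\<Sum>i\<in>I. b (i - 1) * ?T ! (i - 1))"
    unfolding J_def using sum.reindex[OF inj] by simp
  also have "[\<dots> = (\<Sum>i\<in>I. a i * ys ! i)] (mod int ?m)"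
  proof (rule cong_sum)
    fix i assume i: "i \<in> I"
    have si: "Suc (i - 1) = i" "i - 1 < length (tl ys)" using I1 i by auto
    have "?T ! (i - 1) = ys ! i mod int ?m" using si by (simp add: nth_tl)
    then have "b (i - 1) * ?T ! (i - 1) = (a i mod int ?m) * (ys ! i mod int ?m)"
      unfolding b_def using si by simp
    then show "[b (i - 1) * ?T ! (i - 1) = a i * ys ! i] (mod int ?m)"
      by (simp add: cong_def mod_mult_eq)
  qed
  also have "[(\<Sum>i\<in>I. a i * ys ! i) = 0] (mod int ?m)"
  proof -
    have "?m dvd n" by (rule dvdI[of _ _ p]) (use nm in \<open>simp add: mult.commute\<close>)
    then have "int ?m dvd int n" by simp
    then show ?thesis using Ia(4) cong_dvd_modulus by blast
  qed
  finally have "[(\<Sum>j\<in>J. b j * ?T ! j) = 0] (mod int ?m)" .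
  then have "has_wzs ?m (Umod ?m) ?T" unfolding has_wzs_def using J J2 JU
    by (intro exI[of _ J] exI[of _ b]) simp
  then show False using T by contradiction
qed

lemma single_nz:
  assumes sf: "squarefree (n::nat)" and p: "p \<in> prime_factors n" and a: "a \<in> Sgrp n"
    and y: "\<not> int p dvd y" and c: "[a * y = 0] (mod int n)"
  shows False
proof -
  have pi: "prime (int p)" using p by auto
  have "int p dvd int n" using p by auto
  moreover have "int n dvd a * y" using c by (simp add: cong_0_iff)
  ultimately have "int p dvd a * y" using dvd_trans by blast
  moreover have "\<not> int p dvd a" using a coprime_ndvd[OF _ p] unfolding Sgrp_def Umod_def by blast
  ultimately show False using y prime_dvd_mult_iff[OF pi] by blast
qed

lemma part2_nowzs:
  fixes n :: nat and y1 y2 :: int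
  assumes sf: "squarefree n" and pr: "\<forall>p\<in>prime_factors n. p \<ge> 7" and ne: "prime_factors n \<noteq> {}"
    and y1: "y1 \<in> Sgrp n" and y2: "(- y2) mod int n \<in> Umod n - Sgrp n"
  shows "\<not> has_wzs n (Sgrp n) [y1, y2]"
proof
  assume "has_wzs n (Sgrp n) [y1, y2]"
  then obtain I a where Ia: "I \<subseteq> {..<length [y1, y2]}" "I \<noteq> {}" "\<forall>i\<in>I. a i \<in> Sgrp n"
      "[(\<Sum>i\<in>I. a i * [y1, y2] ! i) = 0] (mod int n)"
    unfolding has_wzs_def by blast
  obtain p where p: "p \<in> prime_factors n" using ne by blast
  have z: "(- y2) mod int n \<in> Umod n" "(- y2) mod int n \<notin> Sgrp n" using y2 by auto
  have cz: "coprime ((- y2) mod int n) (int n)" using z(1) unfolding Umod_def by blast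
  have ny1: "\<not> int p dvd y1" using y1 coprime_ndvd[OF _ p] unfolding Sgrp_def Umod_def by blast
  have ny2: "\<not> int p dvd y2"
  proof
    assume "int p dvd y2"
    then have "int p dvd - y2" by simp
    moreover have "int p dvd int n" using p by auto
    ultimately have "int p dvd (- y2) mod int n" by (simp add: dvd_mod)
    then show False using coprime_ndvd[OF cz p] by blast
  qed
  have "I \<subseteq> {0, 1}" using Ia(1) by auto
  then have "I = {0} \<or> I = {1} \<or> I = {0, 1}" using Ia(2) by auto
  then show False
  proof (elim disjE)
    assume "I = {0}"
    then show False using single_nz[OF sf p _ ny1, of "a 0"] Ia(3,4) by simp
  next
    assume "I = {1}"
    then show False using single_nz[OF sf p _ ny2, of "a 1"] Ia(3,4) by simp
  next
    assume I: "I = {0, 1}"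
    have a0: "a 0 \<in> Sgrp n" and a1: "a 1 \<in> Sgrp n" using Ia(3) I by auto
    have "[a 0 * y1 + a 1 * y2 = 0] (mod int n)" using Ia(4) I by simp
    then have "[a 0 * y1 + a 1 * y2 - a 1 * y2 = 0 - a 1 * y2] (mod int n)"
      by (intro cong_diff cong_refl)
    then have "[a 0 * y1 = a 1 * (- y2)] (mod int n)" by simp
    moreover have "[a 1 * (- y2) = a 1 * ((- y2) mod int n)] (mod int n)"
      by (intro cong_mult cong_refl) (simp add: cong_def)
    ultimately have "[a 0 * y1 = a 1 * ((- y2) mod int n)] (mod int n)" by (rule cong_trans)
    then have "jacobi_sym n (a 0 * y1) = jacobi_sym n (a 1 * ((- y2) mod int n))" by (rule jacobi_cong[OF sf])
    moreover have "jacobi_sym n (a 0 * y1) = 1"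
      using jacobi_mult[OF sf pr] a0 y1 unfolding Sgrp_def by simp
    moreover have "jacobi_sym n (a 1 * ((- y2) mod int n)) = jacobi_sym n ((- y2) mod int n)"
      using jacobi_mult[OF sf pr] a1 unfolding Sgrp_def by simp
    ultimately have "jacobi_sym n ((- y2) mod int n) = 1" by simp
    then show False using z unfolding Sgrp_def by blast
  qed
qed

theorem theorem2p13:
  fixes n :: nat and xs :: "int list"
  assumes "odd n" and "squarefree n"
    and "\<forall>p\<in>prime_factors n. p \<ge> 7"
    and "Omega n \<ge> 2"
    and "set xs \<subseteq> Zmod n" and "length xs = Omega n"
  shows "(\<forall>ys p. set ys \<subseteq> Zmod n \<and> equiv_seq n (Sgrp n) xs ys \<and>
            p \<in> prime_factors n \<and> \<not> int p dvd ys ! 0 \<and>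
            (\<forall>i\<in>{1..<length ys}. int p dvd ys ! i) \<and>
            extremal (n div p) (Umod (n div p)) (map (\<lambda>y. y mod int (n div p)) (tl ys))
          \<longrightarrow> extremal n (Sgrp n) xs)
       \<and> (\<forall>y1 y2. Omega n = 2 \<and> set [y1, y2] \<subseteq> Zmod n \<and> equiv_seq n (Sgrp n) xs [y1, y2] \<and>
            y1 \<in> Sgrp n \<and> (- y2) mod int n \<in> Umod n - Sgrp n
          \<longrightarrow> extremal n (Sgrp n) xs)"
proof -
  have sf: "squarefree n" and pr: "\<forall>p\<in>prime_factors n. p \<ge> 7" using assms by auto
  have om: "Omega n = card (prime_factors n)" by (rule sf_Omega[OF sf])
  have k2: "card (prime_factors n) \<ge> 2" using assms(4) om by simp
  have ne: "prime_factors n \<noteq> {}" using k2 by (intro notI) simp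
  have xs: "set xs \<subseteq> Zmod n" "length xs = card (prime_factors n)" using assms(5,6) om by auto
  show ?thesis
  proof (intro conjI allI impI)
    fix ys p
    assume h: "set ys \<subseteq> Zmod n \<and> equiv_seq n (Sgrp n) xs ys \<and>
            p \<in> prime_factors n \<and> \<not> int p dvd ys ! 0 \<and>
            (\<forall>i\<in>{1..<length ys}. int p dvd ys ! i) \<and>
            extremal (n div p) (Umod (n div p)) (map (\<lambda>y. y mod int (n div p)) (tl ys))"
    have T: "\<not> has_wzs (n div p) (Umod (n div p)) (map (\<lambda>y. y mod int (n div p)) (tl ys))"
      using h unfolding extremal_def by blast
    have "\<not> has_wzs n (Sgrp n) ys"
      by (rule part1_nowzs[OF sf _ _ _ T]) (use h in blast)+
    then have "\<not> has_wzs n (Sgrp n) xs" using equiv_wzs[OF sf pr] h by blast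
    then show "extremal n (Sgrp n) xs" by (rule extremal_of[OF sf pr k2 xs])
  next
    fix y1 y2
    assume h: "Omega n = 2 \<and> set [y1, y2] \<subseteq> Zmod n \<and> equiv_seq n (Sgrp n) xs [y1, y2] \<and>
            y1 \<in> Sgrp n \<and> (- y2) mod int n \<in> Umod n - Sgrp n"
    have "\<not> has_wzs n (Sgrp n) [y1, y2]"
      by (rule part2_nowzs[OF sf pr ne]) (use h in blast)+
    then have "\<not> has_wzs n (Sgrp n) xs" using equiv_wzs[OF sf pr] h by blast
    then show "extremal n (Sgrp n) xs" by (rule extremal_of[OF sf pr k2 xs])
  qed
qed


end
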